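(* Let $G=(V,E)$ be a claw-free graph and $I$ a maximum cardinality independent set of $G$. Let $\mathtt{T2}=\bigcup_{a\in I}\mathtt{T2}^a$ and let $G_{\mathtt{T2}}$ be the graph with vertex set $\mathtt{T2}$ whose edges are those edges of $G[\mathtt{T2}]$ whose endpoints lie in different $1$-packs. Let $v,w\in\mathtt{T2}$ with $v\in V_a$, $w\in V_b$, $a\ne b$. Then $vw\in E$ if and only if $v$ and $w$ lie in the same connected component of $G_{\mathtt{T2}}$.
   Context: Graphs are finite, simple, undirected; claw-free means no induced $K_{1,3}$. For $a\in I$, the $1$-pack $V_a$ is $\{v\in V\setminus I : N(v)\cap I=\{a\}\}$. For $a\in I$, $\mathtt{T2}^a$ is the set of vertices $v\in V_a$ that have neighbours in at least two distinct $1$-packs other than $V_a$. *)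

theory Defs
  imports Main
begin

definition simple_graph :: "'a set \<Rightarrow> ('a \<Rightarrow> 'a \<Rightarrow> bool) \<Rightarrow> bool" where
  "simple_graph V E \<longleftrightarrow> finite V \<and> (\<forall>x y. E x y \<longrightarrow> E y x) \<and> (\<forall>x. \<not> E x x)
     \<and> (\<forall>x y. E x y \<longrightarrow> x \<in> V \<and> y \<in> V)"

definition claw_free :: "'a set \<Rightarrow> ('a \<Rightarrow> 'a \<Rightarrow> bool) \<Rightarrow> bool" where
  "claw_free V E \<longleftrightarrow> \<not> (\<exists>c\<in>V. \<exists>x\<in>V. \<exists>y\<in>V. \<exists>z\<in>V.
      E c x \<and> E c y \<and> E c z \<and> x \<noteq> y \<and> x \<noteq> z \<and> y \<noteq> z \<and>
      \<not> E x y \<and> \<not> E x z \<and> \<not> E y z)"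

definition independent_set :: "'a set \<Rightarrow> ('a \<Rightarrow> 'a \<Rightarrow> bool) \<Rightarrow> 'a set \<Rightarrow> bool" where
  "independent_set V E I \<longleftrightarrow> I \<subseteq> V \<and> (\<forall>x\<in>I. \<forall>y\<in>I. \<not> E x y)"

definition maximum_independent_set :: "'a set \<Rightarrow> ('a \<Rightarrow> 'a \<Rightarrow> bool) \<Rightarrow> 'a set \<Rightarrow> bool" where
  "maximum_independent_set V E I \<longleftrightarrow> independent_set V E I \<and>
     (\<forall>J. independent_set V E J \<longrightarrow> card J \<le> card I)"

definition one_pack :: "'a set \<Rightarrow> ('a \<Rightarrow> 'a \<Rightarrow> bool) \<Rightarrow> 'a set \<Rightarrow> 'a \<Rightarrow> 'a set" where
  "one_pack V E I a = {v \<in> V - I. {u \<in> I. E v u} = {a}}"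

definition T2_at :: "'a set \<Rightarrow> ('a \<Rightarrow> 'a \<Rightarrow> bool) \<Rightarrow> 'a set \<Rightarrow> 'a \<Rightarrow> 'a set" where
  "T2_at V E I a = {v \<in> one_pack V E I a. \<exists>b\<in>I. \<exists>c\<in>I. b \<noteq> c \<and> b \<noteq> a \<and> c \<noteq> a \<and>
      (\<exists>x\<in>one_pack V E I b. E v x) \<and> (\<exists>y\<in>one_pack V E I c. E v y)}"

definition T2 :: "'a set \<Rightarrow> ('a \<Rightarrow> 'a \<Rightarrow> bool) \<Rightarrow> 'a set \<Rightarrow> 'a set" where
  "T2 V E I = (\<Union>a\<in>I. T2_at V E I a)"

definition G_T2_edge :: "'a set \<Rightarrow> ('a \<Rightarrow> 'a \<Rightarrow> bool) \<Rightarrow> 'a set \<Rightarrow> 'a \<Rightarrow> 'a \<Rightarrow> bool" where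
  "G_T2_edge V E I x y \<longleftrightarrow> x \<in> T2 V E I \<and> y \<in> T2 V E I \<and> E x y \<and>
     (\<forall>a\<in>I. x \<in> one_pack V E I a \<longrightarrow> y \<notin> one_pack V E I a)"

definition same_component_T2 :: "'a set \<Rightarrow> ('a \<Rightarrow> 'a \<Rightarrow> bool) \<Rightarrow> 'a set \<Rightarrow> 'a \<Rightarrow> 'a \<Rightarrow> bool" where
  "same_component_T2 V E I x y \<longleftrightarrow> (x, y) \<in> {(p, q). G_T2_edge V E I p q}\<^sup>*"

end

theory Submission
  imports Defs
begin

lemma pack_basic:
  assumes "x \<in> one_pack V E I p"
  shows "x \<in> V" "x \<notin> I" "E x p" "\<And>c. c \<in> I \<Longrightarrow> E x c \<Longrightarrow> c = p"
  using assms unfolding one_pack_def by auto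

lemma pack_in_I:
  assumes "x \<in> one_pack V E I p" shows "p \<in> I"
  using assms unfolding one_pack_def by auto

lemma pack_unique:
  assumes "x \<in> one_pack V E I p" "x \<in> one_pack V E I q" shows "p = q"
  using assms unfolding one_pack_def by auto

lemma T2_pack:
  assumes "t \<in> T2 V E I" obtains p where "p \<in> I" "t \<in> one_pack V E I p"
  using assms unfolding T2_def T2_at_def by auto

lemma T2_witness:
  assumes "t \<in> T2 V E I" "t \<in> one_pack V E I b" "a \<in> I"
  obtains e q where "e \<in> I" "e \<noteq> a" "e \<noteq> b" "q \<in> one_pack V E I e" "E t q"
proof -
  obtain d where d: "d \<in> I" "t \<in> T2_at V E I d" using assms(1) unfolding T2_def by auto
  hence "t \<in> one_pack V E I d" unfolding T2_at_def by auto
  hence "d = b" using assms(2) pack_unique by metis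
  then obtain e1 e2 x y where w: "e1 \<in> I" "e2 \<in> I" "e1 \<noteq> e2" "e1 \<noteq> b" "e2 \<noteq> b"
     "x \<in> one_pack V E I e1" "E t x" "y \<in> one_pack V E I e2" "E t y"
    using d unfolding T2_at_def by blast
  show ?thesis
  proof (cases "e1 = a")
    case True
    then show ?thesis using that[of e2 y] w by auto
  next
    case False
    then show ?thesis using that[of e1 x] w by auto
  qed
qed

lemma clique:
  assumes g: "simple_graph V E" and m: "maximum_independent_set V E I"
    and p: "p \<in> one_pack V E I a" and q: "q \<in> one_pack V E I a" and pq: "p \<noteq> q"
  shows "E p q"
proof (rule ccontr)
  assume npq: "\<not> E p q"
  have fin: "finite V" using g unfolding simple_graph_def by auto
  have sym: "\<And>x y. E x y \<Longrightarrow> E y x" using g unfolding simple_graph_def by auto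
  have ind: "independent_set V E I" using m unfolding maximum_independent_set_def by auto
  have IV: "I \<subseteq> V" using ind unfolding independent_set_def by auto
  have aI: "a \<in> I" using p pack_in_I by metis
  let ?J = "insert p (insert q (I - {a}))"
  have "independent_set V E ?J"
    unfolding independent_set_def
  proof (intro conjI ballI)
    show "?J \<subseteq> V" using IV pack_basic(1)[OF p] pack_basic(1)[OF q] by auto
  next
    fix x y assume x: "x \<in> ?J" and y: "y \<in> ?J"
    have A: "\<not> E z c \<and> \<not> E c z" if "z \<in> one_pack V E I a" "c \<in> I - {a}" for z c
    proof -
      have "\<not> E z c" using pack_basic(4)[OF that(1)] that(2) by auto
      then show ?thesis using sym by auto
    qed
    have B: "\<And>x y. x \<in> I \<Longrightarrow> y \<in> I \<Longrightarrow> \<not> E x y" using ind unfolding independent_set_def by auto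
    have C: "\<not> E p p" "\<not> E q q" "\<not> E q p" using g npq sym unfolding simple_graph_def by auto
    show "\<not> E x y" using x y A[OF p] A[OF q] B C npq by auto
  qed
  hence "card ?J \<le> card I" using m unfolding maximum_independent_set_def by auto
  moreover have "finite I" using IV fin finite_subset by auto
  moreover have "p \<notin> I" "q \<notin> I" using pack_basic(2)[OF p] pack_basic(2)[OF q] by auto
  ultimately have "card (I - {a}) + 2 \<le> card I" using pq by (simp add: card_insert_if)
  moreover have "card (I - {a}) + 1 = card I" using aI \<open>finite I\<close>
    by (metis One_nat_def Suc_pred add.right_neutral add_Suc_right card_Diff_singleton card_gt_0_iff empty_iff)
  ultimately show False by simp
qed

lemma CP:
  assumes g: "simple_graph V E" and cf: "claw_free V E"
    and t: "t \<in> one_pack V E I p" and x: "x \<in> one_pack V E I c1" and y: "y \<in> one_pack V E I c2"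
    and c1: "c1 \<noteq> p" and c2: "c2 \<noteq> p" and tx: "E t x" and ty: "E t y" and xy: "x \<noteq> y"
  shows "E x y"
proof (rule ccontr)
  assume nxy: "\<not> E x y"
  have sym: "\<And>x y. E x y \<Longrightarrow> E y x" using g unfolding simple_graph_def by auto
  have pI: "p \<in> I" using t pack_in_I by metis
  have "\<not> E x p" using pack_basic(4)[OF x pI] c1 by auto
  hence px: "\<not> E p x" using sym by auto
  have "\<not> E y p" using pack_basic(4)[OF y pI] c2 by auto
  hence py: "\<not> E p y" using sym by auto
  have d: "p \<noteq> x" "p \<noteq> y" using pI pack_basic(2)[OF x] pack_basic(2)[OF y] by auto
  have V: "t \<in> V" "x \<in> V" "y \<in> V" "p \<in> V" using pack_basic(1) t x y g pack_basic(3)[OF t]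
    unfolding simple_graph_def by auto
  have "E t p" using pack_basic(3)[OF t] .
  moreover have "\<not> E x p" "\<not> E y p" using px py sym by auto
  ultimately have "\<exists>c\<in>V. \<exists>x\<in>V. \<exists>y\<in>V. \<exists>z\<in>V.
      E c x \<and> E c y \<and> E c z \<and> x \<noteq> y \<and> x \<noteq> z \<and> y \<noteq> z \<and>
      \<not> E x y \<and> \<not> E x z \<and> \<not> E y z"
    using V tx ty d nxy xy by (intro bexI[of _ t] bexI[of _ p] bexI[of _ x] bexI[of _ y]) auto
  then show False using cf unfolding claw_free_def by blast
qed

lemma K:
  assumes g: "simple_graph V E" and cf: "claw_free V E"
    and s: "s \<in> one_pack V E I a" and t: "t \<in> one_pack V E I a"
    and r: "r \<in> one_pack V E I c" and ca: "c \<noteq> a" and sr: "E s r" and tr: "E t r"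
    and t': "t' \<in> one_pack V E I b" and ba: "b \<noteq> a" and tt': "E t t'" and t'T: "t' \<in> T2 V E I"
  shows "E s t'"
proof -
  have neq: "\<And>x y p q. x \<in> one_pack V E I p \<Longrightarrow> y \<in> one_pack V E I q \<Longrightarrow> p \<noteq> q \<Longrightarrow> x \<noteq> y"
    using pack_unique by metis
  have aI: "a \<in> I" using s pack_in_I by metis
  show ?thesis
  proof (cases "c = b")
    case False
    have sym: "\<And>x y. E x y \<Longrightarrow> E y x" using g unfolding simple_graph_def by auto
    have "E r t'" using CP[OF g cf t r t' ca ba tr tt' neq[OF r t' False]] .
    then show ?thesis using CP[OF g cf r s t' _ _ sym[OF sr]] ca False ba neq[OF s t'] by metis
  next
    case True
    show ?thesis
    proof (cases "r = t'")
      case True then show ?thesis using sr by simp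
    next
      case rt: False
      obtain e q where e: "e \<in> I" "e \<noteq> a" "e \<noteq> b" "q \<in> one_pack V E I e" "E t' q"
        using T2_witness[OF t'T t' aI] by metis
      have sym: "\<And>x y. E x y \<Longrightarrow> E y x" using g unfolding simple_graph_def by auto
      have "E t q" using CP[OF g cf t' t e(4) _ _ sym[OF tt'] e(5)] ba e neq[OF t e(4)] by metis
      hence "E r q" using CP[OF g cf t r e(4) ca _ tr] e neq[OF r e(4)] True by metis
      hence "E s q" using CP[OF g cf r s e(4) _ _ sym[OF sr]] e neq[OF s e(4)] True ba by metis
      then show ?thesis using CP[OF g cf e(4) s t' _ _ sym[OF \<open>E s q\<close>] sym[OF e(5)]]
        e ba neq[OF s t'] by metis
    qed
  qed
qed

theorem lemma11:
  fixes V :: "'a set" and E :: "'a \<Rightarrow> 'a \<Rightarrow> bool" and I :: "'a set"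
  assumes "simple_graph V E"
    and "claw_free V E"
    and "maximum_independent_set V E I"
    and "a \<in> I" and "b \<in> I" and "a \<noteq> b"
    and "v \<in> T2 V E I" and "w \<in> T2 V E I"
    and "v \<in> one_pack V E I a" and "w \<in> one_pack V E I b"
  shows "E v w \<longleftrightarrow> same_component_T2 V E I v w"
proof
  assume "E v w"
  have "G_T2_edge V E I v w" unfolding G_T2_edge_def
    using assms(7,8,9,10,6) \<open>E v w\<close> pack_unique by metis
  then show "same_component_T2 V E I v w" unfolding same_component_T2_def by auto
next
  note g = assms(1) and cf = assms(2) and m = assms(3) and v = assms(9)
  have neq: "\<And>x y p q. x \<in> one_pack V E I p \<Longrightarrow> y \<in> one_pack V E I q \<Longrightarrow> p \<noteq> q \<Longrightarrow> x \<noteq> y"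
    using pack_unique by metis
  assume "same_component_T2 V E I v w"
  hence R: "(v, w) \<in> {(p, q). G_T2_edge V E I p q}\<^sup>*" unfolding same_component_T2_def .
  define Inv where "Inv t \<longleftrightarrow> t = v \<or> (t \<in> T2 V E I \<and> E v t \<and>
      (t \<in> one_pack V E I a \<longrightarrow> (\<exists>r c. c \<in> I \<and> c \<noteq> a \<and> r \<in> one_pack V E I c \<and> E v r \<and> E t r)))" for t
  have "Inv w" using R
  proof (induction rule: rtrancl_induct)
    case base
    then show ?case unfolding Inv_def by simp
  next
    case (step t t')
    have e: "G_T2_edge V E I t t'" using step(2) by simp
    have tT: "t \<in> T2 V E I" and t'T: "t' \<in> T2 V E I" and tt': "E t t'"
      and dp: "\<forall>p\<in>I. t \<in> one_pack V E I p \<longrightarrow> t' \<notin> one_pack V E I p"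
      using e unfolding G_T2_edge_def by auto
    obtain pt where pt: "pt \<in> I" "t \<in> one_pack V E I pt" using T2_pack[OF tT] by metis
    obtain pt' where pt': "pt' \<in> I" "t' \<in> one_pack V E I pt'" using T2_pack[OF t'T] by metis
    have ptne: "pt \<noteq> pt'" using dp pt pt' by auto
    show ?case
    proof (cases "t' = v")
      case True then show ?thesis unfolding Inv_def by simp
    next
      case t'v: False
      show ?thesis
      proof (cases "t = v")
        case True
        have "pt = a" using pack_unique True pt(2) v by metis
        then show ?thesis unfolding Inv_def using True tt' t'T ptne pt' pack_unique by metis
      next
        case tv: False
        have vt: "E v t" and B: "t \<in> one_pack V E I a \<longrightarrow> (\<exists>r c. c \<in> I \<and> c \<noteq> a \<and> r \<in> one_pack V E I c \<and> E v r \<and> E t r)"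
          using step(3) tv unfolding Inv_def by auto
        show ?thesis
        proof (cases "pt = a")
          case False
          show ?thesis
          proof (cases "pt' = a")
            case False
            have "E t v" using vt g unfolding simple_graph_def by auto
            have "E v t'" using CP[OF g cf pt(2) v pt'(2) _ _ \<open>E t v\<close> tt'] False \<open>pt \<noteq> a\<close> ptne t'v by metis
            then show ?thesis unfolding Inv_def using t'T pt' False pack_unique by metis
          next
            case True
            have "E v t'" using clique[OF g m v] pt'(2) True t'v by metis
            moreover have "E t' t" using tt' g unfolding simple_graph_def by auto
            ultimately show ?thesis unfolding Inv_def using t'T pt \<open>pt \<noteq> a\<close> vt by metis
          qed
        next
          case True
          then obtain r c where rc: "c \<in> I" "c \<noteq> a" "r \<in> one_pack V E I c" "E v r" "E t r"
            using B pt by metis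
          have "E v t'" using K[OF g cf v _ rc(3) rc(2) rc(4) rc(5) pt'(2) _ tt' t'T] True pt ptne by metis
          then show ?thesis unfolding Inv_def using t'T pt' True ptne pack_unique by metis
        qed
      qed
    qed
  qed
  moreover have "w \<noteq> v" using neq assms by metis
  ultimately show "E v w" unfolding Inv_def by auto
qed

end
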